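(* Fermionic setting. Given $M_1,M_2\in\mathrm{SO}(2N,\mathbb{R})$, there exists a compatible complex structure $\tilde J$ such that, with all quantities computed with respect to $\tilde J$, the circle function $\tilde\varphi$ is defined at $M_1$, $M_2$ and $M_1M_2$, and the cocycle $\tilde\eta(M_1,M_2)$ is defined.
   Context: A compatible complex structure is a real orthogonal $2N\times2N$ matrix $\tilde J$ with $\tilde J^2=-\mathbb{1}$. With respect to $\tilde J$: $\tilde C_M=\frac12(M-\tilde JM\tilde J)$, $\tilde D_M=\frac12(M+\tilde JM\tilde J)$, $\tilde Z_M=\tilde C_M^{-1}\tilde D_M$; for $A$ commuting with $\tilde J$, written $\begin{pmatrix}A_1&A_2\\-A_2&A_1\end{pmatrix}$ in an orthonormal basis in which $\tilde J=\begin{pmatrix}0&\mathbb{1}\\-\mathbb{1}&0\end{pmatrix}$, $\overline A=A_1+\mathrm{i}A_2$ and $\overline{\det}(A)=\det\overline A$. The circle function $\tilde\varphi(M)=\overline{\det}(\tilde C_M)/|\overline{\det}(\tilde C_M)|$ is defined when $\overline{\det}(\tilde C_M)\ne0$ (equivalently $\det(\mathbb{1}+\tilde\Delta_M)\neq 0$ with $\tilde\Delta_M=-M\tilde JM^{-1}\tilde J$). The cocycle $\tilde\eta(M_1,M_2)=\sum_i\arg\lambda_i$, $\lambda_i$ the eigenvalues of $\overline{\mathbb{1}-\tilde Z_{M_1}\tilde Z_{M_2^{-1}}}$, $\arg\in(-\pi,\pi]$, is defined when $\tilde C_{M_1}$, $\tilde C_{M_2^{-1}}$ and $\mathbb{1}-\tilde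 Z_{M_1}\tilde Z_{M_2^{-1}}$ are invertible. *)

theory Defs
  imports "HOL-Analysis.Analysis"
begin

text \<open>Real 2N x 2N matrices are indexed by the type 'n + 'n (N = CARD('n)).
  The first copy of 'n indexes the first N basis vectors, the second copy the last N.\<close>

type_synonym 'n rmat = "real ^ ('n + 'n) ^ ('n + 'n)"

definition J0 :: "'n::finite rmat" where
  "J0 = (\<chi> i j. (case (i, j) of
                     (Inl a, Inr b) \<Rightarrow> (if a = b then 1 else 0)
                   | (Inr a, Inl b) \<Rightarrow> (if a = b then -1 else 0)
                   | _ \<Rightarrow> 0))"

definition SO :: "'n::finite rmat set" where
  "SO = {M. orthogonal_matrix M \<and> det M = 1}"

definition compat_cs :: "'n::finite rmat \<Rightarrow> bool" where
  "compat_cs J \<longleftrightarrow> orthogonal_matrix J \<and> J ** J = - mat 1"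

definition Cm :: "'n::finite rmat \<Rightarrow> 'n rmat \<Rightarrow> 'n rmat" where
  "Cm J M = (1/2) *\<^sub>R (M - J ** M ** J)"

definition Dm :: "'n::finite rmat \<Rightarrow> 'n rmat \<Rightarrow> 'n rmat" where
  "Dm J M = (1/2) *\<^sub>R (M + J ** M ** J)"

definition Zm :: "'n::finite rmat \<Rightarrow> 'n rmat \<Rightarrow> 'n rmat" where
  "Zm J M = matrix_inv (Cm J M) ** Dm J M"

definition std_basis :: "'n::finite rmat \<Rightarrow> 'n rmat" where
  "std_basis J = (SOME Q. orthogonal_matrix Q \<and> transpose Q ** J ** Q = J0)"

text \<open>For A commuting with J, written as [[A1, A2], [-A2, A1]] in that basis,
  bar A = A1 + i A2, and bar-det A = det (bar A).\<close>
definition cbar :: "'n::finite rmat \<Rightarrow> 'n rmat \<Rightarrow> complex ^ 'n ^ 'n" where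
  "cbar J A = (let Q = std_basis J; A' = transpose Q ** A ** Q in
     (\<chi> a b. complex_of_real (A' $ Inl a $ Inl b) + \<i> * complex_of_real (A' $ Inl a $ Inr b)))"

definition detbar :: "'n::finite rmat \<Rightarrow> 'n rmat \<Rightarrow> complex" where
  "detbar J A = det (cbar J A)"

definition circle_defined :: "'n::finite rmat \<Rightarrow> 'n rmat \<Rightarrow> bool" where
  "circle_defined J M \<longleftrightarrow> detbar J (Cm J M) \<noteq> 0"

definition circle_fun :: "'n::finite rmat \<Rightarrow> 'n rmat \<Rightarrow> complex" where
  "circle_fun J M = detbar J (Cm J M) / complex_of_real (cmod (detbar J (Cm J M)))"

definition cocycle_defined :: "'n::finite rmat \<Rightarrow> 'n rmat \<Rightarrow> 'n rmat \<Rightarrow> bool" where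
  "cocycle_defined J M1 M2 \<longleftrightarrow>
     invertible (Cm J M1) \<and> invertible (Cm J (matrix_inv M2)) \<and>
     invertible (mat 1 - Zm J M1 ** Zm J (matrix_inv M2))"

end

theory Submission
  imports Defs "HOL-Complex_Analysis.Conformal_Mappings"
begin


lemma sum_UNIV_sum: "(\<Sum>k\<in>(UNIV::('a::finite + 'b::finite) set). f k) = (\<Sum>a\<in>UNIV. f (Inl a)) + (\<Sum>b\<in>UNIV. f (Inr b))"
  using sum.Plus[of "UNIV::'a set" "UNIV::'b set" f] by (simp add: o_def)

lemma mat_eqI: "(\<And>i j. A $ i $ j = B $ i $ j) \<Longrightarrow> A = B"
  by (simp add: vec_eq_iff)

definition Rot :: "('n::finite \<Rightarrow> real) \<Rightarrow> ('n \<Rightarrow> real) \<Rightarrow> 'n rmat" where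
  "Rot c s = (\<chi> i j. case i of
      Inl a \<Rightarrow> (case j of Inl b \<Rightarrow> if a = b then c a else 0 | Inr b \<Rightarrow> if a = b then s a else 0)
    | Inr a \<Rightarrow> (case j of Inl b \<Rightarrow> if a = b then - s a else 0 | Inr b \<Rightarrow> if a = b then c a else 0))"

lemma Rot_simps [simp]:
  "Rot c s $ Inl a $ Inl b = (if a = b then c a else 0)"
  "Rot c s $ Inl a $ Inr b = (if a = b then s a else 0)"
  "Rot c s $ Inr a $ Inl b = (if a = b then - s a else 0)"
  "Rot c s $ Inr a $ Inr b = (if a = b then c a else 0)"
  by (simp_all add: Rot_def)

lemma J0_Rot: "J0 = Rot (\<lambda>_. 0) (\<lambda>_. 1)"
  unfolding J0_def Rot_def by (rule vec_eq_iff[THEN iffD2], auto simp: vec_eq_iff split: sum.splits)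

lemma Rot_mult: "Rot c s ** Rot c' s' = Rot (\<lambda>a. c a * c' a - s a * s' a) (\<lambda>a. c a * s' a + s a * c' a)"
proof -
  have "(Rot c s ** Rot c' s') $ i $ j = Rot (\<lambda>a. c a * c' a - s a * s' a) (\<lambda>a. c a * s' a + s a * c' a) $ i $ j" for i j
    by (cases i; cases j) (simp_all add: matrix_matrix_mult_def sum_UNIV_sum if_distrib if_distribR sum.delta cong: if_cong)
  then show ?thesis by (simp add: vec_eq_iff)
qed

lemma Rot_transpose: "transpose (Rot c s) = Rot c (\<lambda>a. - s a)"
proof -
  have "transpose (Rot c s) $ i $ j = Rot c (\<lambda>a. - s a) $ i $ j" for i j
    by (cases i; cases j) (simp_all add: transpose_def)
  then show ?thesis by (simp add: vec_eq_iff)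
qed

lemma Rot_one: "Rot (\<lambda>_. 1) (\<lambda>_. 0) = mat 1"
  by (rule mat_eqI, case_tac i; case_tac j; simp add: mat_def)

lemma Rot_eqI: "(\<And>a. c a = c' a) \<Longrightarrow> (\<And>a. s a = s' a) \<Longrightarrow> Rot c s = Rot c' s'"
  by (metis ext)

lemma Rot_orth: assumes "\<And>a. c a ^ 2 + s a ^ 2 = 1" shows "orthogonal_matrix (Rot c s)"
proof -
  have "transpose (Rot c s) ** Rot c s = mat 1"
    unfolding Rot_transpose Rot_mult Rot_one[symmetric]
    by (rule Rot_eqI) (use assms in \<open>auto simp: power2_eq_square algebra_simps\<close>)
  then show ?thesis by (simp add: orthogonal_matrix)
qed

lemma Rot_comm: "Rot c s ** Rot c' s' = Rot c' s' ** Rot c s"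
  unfolding Rot_mult by (rule Rot_eqI) (auto simp: algebra_simps)

lemma J0_sq: "J0 ** J0 = - mat 1"
proof -
  have "J0 ** J0 = Rot (\<lambda>_. -1) (\<lambda>_. 0)" unfolding J0_Rot Rot_mult by (rule Rot_eqI) auto
  also have "\<dots> = - mat 1"
    by (rule mat_eqI, case_tac i; case_tac j; simp add: mat_def)
  finally show ?thesis .
qed

lemma J0_orth: "orthogonal_matrix J0"
  unfolding J0_Rot by (rule Rot_orth) simp

lemma det_Rot: assumes "\<And>a. c a ^ 2 + s a ^ 2 = 1" shows "det (Rot c s) = 1"
proof -
  have "\<exists>t. c a = cos t \<and> s a = sin t" for a
    using sincos_total_2pi[of "c a" "s a"] assms[of a] by metis
  then obtain t where t: "\<And>a. c a = cos (t a) \<and> s a = sin (t a)" by metis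
  let ?R = "Rot (\<lambda>a. cos (t a / 2)) (\<lambda>a. sin (t a / 2))"
  have "?R ** ?R = Rot c s"
    unfolding Rot_mult
  proof (rule Rot_eqI)
    fix a
    have "t a = t a / 2 + t a / 2" by simp
    then show "cos (t a / 2) * cos (t a / 2) - sin (t a / 2) * sin (t a / 2) = c a"
      "cos (t a / 2) * sin (t a / 2) + sin (t a / 2) * cos (t a / 2) = s a"
      using t[of a] by (metis cos_add, metis sin_add add.commute mult.commute)
  qed
  then have "det (Rot c s) = det ?R * det ?R" by (metis det_mul)
  moreover have "det ?R = 1 \<or> det ?R = -1"
    by (rule det_orthogonal_matrix, rule Rot_orth) simp
  ultimately show ?thesis by auto
qed



lemma matrix_add_rdistrib: "(A + B) ** C = A ** C + B ** (C::'a::semiring_1^_^_)"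
  by (simp add: matrix_matrix_mult_def vec_eq_iff sum.distrib algebra_simps)
lemma matrix_diff_ldistrib: "A ** (B - C) = A ** B - A ** (C::'a::ring_1^_^_)"
  by (simp add: matrix_matrix_mult_def vec_eq_iff sum_subtractf algebra_simps)
lemma matrix_diff_rdistrib: "(A - B) ** C = A ** C - B ** (C::'a::ring_1^_^_)"
  by (simp add: matrix_matrix_mult_def vec_eq_iff sum_subtractf algebra_simps)
lemma matrix_neg_left: "(- A) ** B = - (A ** (B::'a::ring_1^_^_))"
  by (simp add: matrix_matrix_mult_def vec_eq_iff sum_negf)
lemma matrix_neg_right: "A ** (- B) = - (A ** (B::'a::ring_1^_^_))"
  by (simp add: matrix_matrix_mult_def vec_eq_iff sum_negf)
lemma mat_scaleR_left: "(k *\<^sub>R A) ** B = k *\<^sub>R (A ** (B::real^_^_))"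
  by (simp add: scalar_matrix_assoc)
lemma mat_scaleR_right: "A ** (k *\<^sub>R B) = k *\<^sub>R (A ** (B::real^_^_))"
  by (simp add: matrix_scalar_ac scalar_matrix_assoc)

lemmas MA = matrix_add_ldistrib matrix_add_rdistrib matrix_diff_ldistrib matrix_diff_rdistrib
  matrix_neg_left matrix_neg_right mat_scaleR_left mat_scaleR_right matrix_mul_assoc

definition Jof :: "'n::finite rmat \<Rightarrow> 'n rmat" where
  "Jof R = R ** J0 ** transpose R"

definition good :: "'n::finite rmat \<Rightarrow> 'n rmat \<Rightarrow> bool" where
  "good R A \<longleftrightarrow> det (Jof R ** A + A ** Jof R) \<noteq> 0"

lemma compat_Jof: assumes "orthogonal_matrix R" shows "compat_cs (Jof R)"
proof -
  have RR: "transpose R ** R = mat 1" "R ** transpose R = mat 1" using assms by (auto simp: orthogonal_matrix_def)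
  have "Jof R ** Jof R = R ** J0 ** (transpose R ** R) ** J0 ** transpose R"
    by (simp add: Jof_def matrix_mul_assoc)
  also have "\<dots> = R ** (J0 ** J0) ** transpose R" by (simp add: RR matrix_mul_assoc)
  also have "\<dots> = - mat 1" by (simp add: J0_sq MA RR)
  finally show ?thesis
    unfolding compat_cs_def Jof_def
    using assms J0_orth by (auto intro!: orthogonal_matrix_mul)
qed

lemma JJ: assumes "compat_cs J" shows "J ** J = - mat 1" "X ** J ** J = - X"
  using assms unfolding compat_cs_def by (auto simp: MA simp flip: matrix_mul_assoc)

lemma J_transpose: assumes "compat_cs J" shows "transpose J = - J"
proof -
  have o: "transpose J ** J = mat 1" using assms by (auto simp: compat_cs_def orthogonal_matrix_def)
  have "transpose J = transpose J ** (- (J ** J))" using JJ(1)[OF assms] by (simp add: MA)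
  also have "\<dots> = - J" by (simp add: MA o flip: matrix_mul_assoc) (simp add: matrix_mul_assoc o)
  finally show ?thesis .
qed

lemma Cm_alt: assumes "compat_cs J" shows "Cm J M = (- 1/2) *\<^sub>R (J ** (J ** M + M ** J))"
  unfolding Cm_def by (simp add: MA JJ[OF assms] scaleR_right_diff_distrib scaleR_right_distrib)

lemma Cm_comm: assumes "compat_cs J" shows "J ** Cm J M = Cm J M ** J"
  unfolding Cm_def by (simp add: MA JJ[OF assms] scaleR_right_diff_distrib scaleR_right_distrib)

lemma Cm_mult: assumes "compat_cs J"
  shows "Cm J (M1 ** M2) = Cm J M1 ** Cm J M2 + Dm J M1 ** Dm J M2"
  unfolding Cm_def Dm_def by (simp add: MA JJ[OF assms] scaleR_right_diff_distrib scaleR_right_distrib)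

lemma minv: assumes "invertible (A::'a::semiring_1^'n^'n)"
  shows "A ** matrix_inv A = mat 1" "matrix_inv A ** A = mat 1"
  using someI_ex[OF assms[unfolded invertible_def]] unfolding matrix_inv_def by auto

lemma minv_unique: assumes "invertible (A::'a::semiring_1^'n^'n)" "B ** A = mat 1"
  shows "matrix_inv A = B"
proof -
  have "matrix_inv A = (B ** A) ** matrix_inv A" by (simp add: assms)
  also have "\<dots> = B" by (simp add: minv[OF assms(1)] flip: matrix_mul_assoc)
  finally show ?thesis .
qed

lemma minv_orth: assumes "orthogonal_matrix (M::real^'n^'n)" shows "matrix_inv M = transpose M"
  using assms by (intro minv_unique) (auto simp: orthogonal_matrix_def invertible_def)

lemma transpose_diff: "transpose (A - B) = transpose A - transpose (B::'a::ring_1^_^_)"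
  by (simp add: transpose_def vec_eq_iff)
lemma transpose_add: "transpose (A + B) = transpose A + transpose (B::'a::semiring_1^_^_)"
  by (simp add: transpose_def vec_eq_iff)

lemma Cm_transpose: assumes "compat_cs J" shows "transpose (Cm J M) = Cm J (transpose M)"
  unfolding Cm_def by (simp add: transpose_scalar matrix_transpose_mul J_transpose[OF assms] MA transpose_diff)

lemma Dm_transpose: assumes "compat_cs J" shows "transpose (Dm J M) = Dm J (transpose M)"
  unfolding Dm_def by (simp add: transpose_scalar matrix_transpose_mul J_transpose[OF assms] MA transpose_add)

lemma orth_rel: assumes "compat_cs J" "transpose M ** M = mat 1"
  shows "transpose (Dm J M) ** Cm J M = - (transpose (Cm J M) ** Dm J M)"
proof -
  have r: "X ** transpose M ** M = X" for X using assms(2) by (simp flip: matrix_mul_assoc)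
  show ?thesis
    unfolding Cm_transpose[OF assms(1)] Dm_transpose[OF assms(1)] unfolding Cm_def Dm_def
    by (simp add: MA JJ[OF assms(1)] r assms(2) scaleR_right_diff_distrib scaleR_right_distrib algebra_simps)
qed

lemma inv_from_det: "det (A::real^'n^'n) \<noteq> 0 \<longleftrightarrow> invertible A"
  by (simp add: invertible_det_nz)

lemma cocycle_ok:
  assumes J: "compat_cs J" and o2: "orthogonal_matrix M2"
    and i1: "invertible (Cm J M1)" and i2: "invertible (Cm J M2)" and i12: "invertible (Cm J (M1 ** M2))"
  shows "cocycle_defined J M1 M2"
proof -
  let ?C1 = "Cm J M1" and ?C2 = "Cm J M2" and ?D1 = "Dm J M1" and ?D2 = "Dm J M2"
  have mi: "matrix_inv M2 = transpose M2" by (rule minv_orth[OF o2])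
  have i2t: "invertible (transpose ?C2)" by (rule transpose_invertible[OF i2])
  have C2t: "Cm J (matrix_inv M2) = transpose ?C2" by (simp add: mi Cm_transpose[OF J])
  have D2t: "Dm J (matrix_inv M2) = transpose ?D2" by (simp add: mi Dm_transpose[OF J])
  have rel: "transpose ?D2 ** ?C2 = - (transpose ?C2 ** ?D2)"
    by (rule orth_rel[OF J]) (use o2 in \<open>simp add: orthogonal_matrix_def\<close>)
  let ?X = "mat 1 - Zm J M1 ** Zm J (matrix_inv M2)"
  have X: "?X = mat 1 - matrix_inv ?C1 ** ?D1 ** matrix_inv (transpose ?C2) ** transpose ?D2"
    unfolding Zm_def C2t D2t by (simp add: matrix_mul_assoc)
  have "?C1 ** ?X ** ?C2 = ?C1 ** ?C2 - (?C1 ** matrix_inv ?C1) ** ?D1 ** matrix_inv (transpose ?C2) ** (transpose ?D2 ** ?C2)"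
    unfolding X by (simp add: MA)
  also have "\<dots> = ?C1 ** ?C2 + ?D1 ** (matrix_inv (transpose ?C2) ** transpose ?C2) ** ?D2"
    unfolding rel minv[OF i1] by (simp add: MA)
  also have "\<dots> = Cm J (M1 ** M2)"
    unfolding minv[OF i2t] Cm_mult[OF J] by simp
  finally have eq: "?C1 ** ?X ** ?C2 = Cm J (M1 ** M2)" .
  have "det ?C1 * det ?X * det ?C2 \<noteq> 0"
    using i12 unfolding eq[symmetric] inv_from_det[symmetric] det_mul by simp
  then have "invertible ?X" by (simp add: inv_from_det[symmetric])
  then show ?thesis
    unfolding cocycle_defined_def C2t using i1 i2t by simp
qed



lemma J0_left: "(J0 ** X) $ Inl a $ j = X $ Inr a $ j" "(J0 ** X) $ Inr a $ j = - X $ Inl a $ j"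
  by (simp_all add: J0_Rot matrix_matrix_mult_def sum_UNIV_sum if_distrib if_distribR sum.delta cong: if_cong)

lemma J0_right: "(X ** J0) $ i $ Inl b = - X $ i $ Inr b" "(X ** J0) $ i $ Inr b = X $ i $ Inl b"
  by (simp_all add: J0_Rot matrix_matrix_mult_def sum_UNIV_sum if_distrib if_distribR sum.delta' cong: if_cong)

lemma std_basis_prop: assumes "orthogonal_matrix R"
  shows "orthogonal_matrix (std_basis (Jof R)) \<and> transpose (std_basis (Jof R)) ** Jof R ** std_basis (Jof R) = J0"
proof -
  have RR: "transpose R ** R = mat 1" using assms by (auto simp: orthogonal_matrix_def)
  have "transpose R ** Jof R ** R = (transpose R ** R) ** J0 ** (transpose R ** R)"
    by (simp add: Jof_def matrix_mul_assoc)
  then have "\<exists>Q. orthogonal_matrix Q \<and> transpose Q ** Jof R ** Q = J0"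
    using assms RR by auto
  then show ?thesis unfolding std_basis_def by (rule someI_ex)
qed

lemma detbar_nz:
  fixes R :: "'n::finite rmat"
  assumes oR: "orthogonal_matrix R" and iC: "invertible C" and comm: "Jof R ** C = C ** Jof R"
  shows "detbar (Jof R) C \<noteq> 0"
proof
  assume H: "detbar (Jof R) C = 0"
  define J where "J = Jof R"
  define Q where "Q = std_basis J"
  have oQ: "orthogonal_matrix Q" and QJ: "transpose Q ** J ** Q = J0"
    using std_basis_prop[OF oR] unfolding J_def Q_def by auto
  have QQ: "Q ** transpose Q = mat 1" "transpose Q ** Q = mat 1" using oQ by (auto simp: orthogonal_matrix_def)
  define C' where "C' = transpose Q ** C ** Q"
  have "J0 ** C' = transpose Q ** J ** (Q ** transpose Q) ** C ** Q"
    unfolding C'_def QJ[symmetric] by (simp add: matrix_mul_assoc)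
  also have "\<dots> = transpose Q ** (J ** C) ** Q" by (simp add: QQ matrix_mul_assoc)
  also have "\<dots> = transpose Q ** C ** (Q ** transpose Q) ** J ** Q" 
    unfolding J_def comm by (simp add: QQ matrix_mul_assoc)
  also have "\<dots> = C' ** J0" unfolding C'_def QJ[symmetric] by (simp add: matrix_mul_assoc)
  finally have cm: "J0 ** C' = C' ** J0" .
  have e1: "C' $ Inr a $ Inr b = C' $ Inl a $ Inl b" for a b
    using arg_cong[OF cm, of "\<lambda>X. X $ Inl a $ Inr b"] by (simp add: J0_left J0_right)
  have e2: "C' $ Inr a $ Inl b = - C' $ Inl a $ Inr b" for a b
    using arg_cong[OF cm, of "\<lambda>X. X $ Inl a $ Inl b"] by (simp add: J0_left J0_right)
  have iC': "invertible C'"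
  proof -
    have "det Q \<noteq> 0" using det_orthogonal_matrix[OF oQ] by auto
    moreover have "det C \<noteq> 0" using iC by (simp add: invertible_det_nz)
    ultimately show ?thesis unfolding C'_def invertible_det_nz det_mul by simp
  qed
  define B where "B = ((\<chi> a b. complex_of_real (C' $ Inl a $ Inl b) + \<i> * complex_of_real (C' $ Inl a $ Inr b)) :: complex^'n^'n)"
  have "cbar J C = B" unfolding cbar_def B_def C'_def Q_def Let_def ..
  with H have "det B = 0" unfolding detbar_def J_def by simp
  then have "\<not> inj ((*v) B)"
    using det_nz_iff_inj_gen[OF matrix_vector_mul_linear_gen[of B]] by (simp add: matrix_of_matrix_vector_mul)
  then obtain v w where vw: "v \<noteq> w" "B *v v = B *v w" unfolding inj_def by blast
  define z where "z = v - w"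
  have z0: "z \<noteq> 0" and Bz: "B *v z = 0" using vw by (auto simp: z_def matrix_vector_mult_diff_distrib)
  define u where "u = ((\<chi> k. case k of Inl b \<Rightarrow> Re (z $ b) | Inr b \<Rightarrow> - Im (z $ b)) :: real^('n+'n))"
  have u0: "u \<noteq> 0"
  proof
    assume "u = 0"
    then have "u $ Inl b = 0" "u $ Inr b = 0" for b by simp_all
    then have "Re (z $ b) = 0 \<and> Im (z $ b) = 0" for b
      unfolding u_def by (metis (no_types) neg_equal_0_iff_equal sum.case vec_lambda_beta)
    then have "z = 0" by (simp add: vec_eq_iff complex_eq_iff)
    with z0 show False by simp
  qed
  have comp: "(\<Sum>b\<in>UNIV. B $ a $ b * z $ b) = 0" for a
    using arg_cong[OF Bz, of "\<lambda>x. x $ a"] by (simp add: matrix_vector_mult_def)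
  have re: "(\<Sum>b\<in>UNIV. C' $ Inl a $ Inl b * Re (z $ b) - C' $ Inl a $ Inr b * Im (z $ b)) = 0" for a
    using arg_cong[OF comp[of a], of Re] by (simp add: B_def Re_sum)
  have im: "(\<Sum>b\<in>UNIV. C' $ Inl a $ Inr b * Re (z $ b) + C' $ Inl a $ Inl b * Im (z $ b)) = 0" for a
    using arg_cong[OF comp[of a], of Im] by (simp add: B_def Im_sum add.commute)
  have "C' *v u = 0"
  proof -
    have "(C' *v u) $ k = 0" for k
    proof (cases k)
      case (Inl a)
      then show ?thesis using re[of a]
        by (simp add: matrix_vector_mult_def sum_UNIV_sum u_def sum_subtractf[symmetric] sum_negf)
    next
      case (Inr a)
      have "(C' *v u) $ k = - (\<Sum>b\<in>UNIV. C' $ Inl a $ Inr b * Re (z $ b) + C' $ Inl a $ Inl b * Im (z $ b))"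
        using Inr by (simp add: matrix_vector_mult_def sum_UNIV_sum u_def e1 e2 sum.distrib[symmetric] sum_negf[symmetric])
      then show ?thesis using im[of a] by simp
    qed
    then show ?thesis by (simp add: vec_eq_iff)
  qed
  moreover have "inj ((*v) C')" by (rule inj_matrix_vector_mult[OF iC'])
  ultimately show False using u0 by (metis matrix_vector_mult_0_right injD)
qed

lemma good_Cm_inv: assumes oR: "orthogonal_matrix R" and g: "good R M"
  shows "invertible (Cm (Jof R) M)"
proof -
  have J: "compat_cs (Jof R)" by (rule compat_Jof[OF oR])
  have "det (Jof R) \<noteq> 0" using J det_orthogonal_matrix[of "Jof R"] by (auto simp: compat_cs_def)
  then have "invertible (Jof R ** (Jof R ** M + M ** Jof R))"
    using g unfolding good_def by (simp add: invertible_det_nz det_mul)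
  then show ?thesis unfolding Cm_alt[OF J] by (intro scalar_invertible) auto
qed

lemma assemble:
  fixes R :: "'n::finite rmat"
  assumes oR: "orthogonal_matrix R" and M1: "M1 \<in> SO" and M2: "M2 \<in> SO"
    and g1: "good R M1" and g2: "good R M2" and g12: "good R (M1 ** M2)"
  shows "\<exists>J. compat_cs J \<and> circle_defined J M1 \<and> circle_defined J M2 \<and>
             circle_defined J (M1 ** M2) \<and> cocycle_defined J M1 M2"
proof (intro exI conjI)
  let ?J = "Jof R"
  show J: "compat_cs ?J" by (rule compat_Jof[OF oR])
  have cd: "circle_defined ?J M" if "good R M" for M
    unfolding circle_defined_def
    by (rule detbar_nz[OF oR good_Cm_inv[OF oR that] Cm_comm[OF J]])
  show "circle_defined ?J M1" "circle_defined ?J M2" "circle_defined ?J (M1 ** M2)"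
    using cd g1 g2 g12 by auto
  show "cocycle_defined ?J M1 M2"
    by (rule cocycle_ok[OF J _ good_Cm_inv[OF oR g1] good_Cm_inv[OF oR g2] good_Cm_inv[OF oR g12]])
       (use M2 in \<open>simp add: SO_def\<close>)
qed



definition entire_real :: "(real \<Rightarrow> real) \<Rightarrow> bool" where
  "entire_real F \<longleftrightarrow> (\<exists>G. G holomorphic_on UNIV \<and> (\<forall>t. G (complex_of_real t) = complex_of_real (F t)))"

lemma entire_real_const: "entire_real (\<lambda>t. c)"
  unfolding entire_real_def by (rule exI[of _ "\<lambda>_. complex_of_real c"]) auto

lemma entire_real_add: "entire_real f \<Longrightarrow> entire_real g \<Longrightarrow> entire_real (\<lambda>t. f t + g t)"
  unfolding entire_real_def
  by (elim exE conjE, rule_tac x="\<lambda>z. G z + Ga z" in exI) (auto intro!: holomorphic_intros)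

lemma entire_real_diff: "entire_real f \<Longrightarrow> entire_real g \<Longrightarrow> entire_real (\<lambda>t. f t - g t)"
  unfolding entire_real_def
  by (elim exE conjE, rule_tac x="\<lambda>z. G z - Ga z" in exI) (auto intro!: holomorphic_intros)

lemma entire_real_mult: "entire_real f \<Longrightarrow> entire_real g \<Longrightarrow> entire_real (\<lambda>t. f t * g t)"
  unfolding entire_real_def
  by (elim exE conjE, rule_tac x="\<lambda>z. G z * Ga z" in exI) (auto intro!: holomorphic_intros)

lemma entire_real_cos: "entire_real (\<lambda>t. cos (a * t))"
  unfolding entire_real_def
  by (rule exI[of _ "\<lambda>z. cos (complex_of_real a * z)"]) (auto intro!: holomorphic_intros simp: cos_of_real[symmetric])

lemma entire_real_sin: "entire_real (\<lambda>t. sin (a * t))"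
  unfolding entire_real_def
  by (rule exI[of _ "\<lambda>z. sin (complex_of_real a * z)"]) (auto intro!: holomorphic_intros simp: sin_of_real[symmetric])

lemma entire_real_sum: "finite S \<Longrightarrow> (\<And>x. x \<in> S \<Longrightarrow> entire_real (f x)) \<Longrightarrow> entire_real (\<lambda>t. \<Sum>x\<in>S. f x t)"
  by (induction S rule: finite_induct) (auto intro: entire_real_add entire_real_const)

lemma entire_real_prod: "finite S \<Longrightarrow> (\<And>x. x \<in> S \<Longrightarrow> entire_real (f x)) \<Longrightarrow> entire_real (\<lambda>t. \<Prod>x\<in>S. f x t)"
  by (induction S rule: finite_induct) (auto intro: entire_real_mult entire_real_const)

lemma entire_real_common_nonzero:
  assumes f: "entire_real f" and g: "entire_real g" and fa: "f a \<noteq> 0" and gb: "g b \<noteq> 0"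
  shows "\<exists>t. f t \<noteq> 0 \<and> g t \<noteq> 0"
proof (rule ccontr)
  assume H: "\<not> (\<exists>t. f t \<noteq> 0 \<and> g t \<noteq> 0)"
  obtain F where F: "F holomorphic_on UNIV" "\<And>t. F (complex_of_real t) = complex_of_real (f t)"
    using f unfolding entire_real_def by blast
  obtain G where G: "G holomorphic_on UNIV" "\<And>t. G (complex_of_real t) = complex_of_real (g t)"
    using g unfolding entire_real_def by blast
  have hol: "(\<lambda>z. F z * G z) holomorphic_on UNIV" using F G by (auto intro!: holomorphic_intros)
  have lim: "0 islimpt (range complex_of_real)"
  proof -
    have "(\<lambda>n. complex_of_real (inverse (real (Suc n)))) \<longlonglongrightarrow> complex_of_real 0"
      by (intro tendsto_of_real LIMSEQ_inverse_real_of_nat)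
    moreover have "\<And>n. 1 + complex_of_nat n \<noteq> 0" by (metis of_nat_Suc of_nat_eq_0_iff nat.distinct(1))
    ultimately show ?thesis
      by (intro islimpt_sequential[THEN iffD2]) (auto intro!: exI[of _ "\<lambda>n. complex_of_real (inverse (real (Suc n)))"])
  qed
  have FG0: "F z * G z = 0" for z
    by (rule analytic_continuation[OF hol, where U="range complex_of_real" and \<xi>=0]) (use H F G lim in auto)
  have opn: "open {z. F z \<noteq> 0}"
  proof -
    have "continuous_on UNIV F" using F(1) holomorphic_on_imp_continuous_on by blast
    then have "open (F -` (-{0}))" by (simp add: continuous_on_open_vimage open_Compl)
    then show ?thesis by (simp add: vimage_def)
  qed
  have ne: "{z. F z \<noteq> 0} \<noteq> {}" using F(2)[of a] fa by (auto intro!: exI[of _ "complex_of_real a"])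
  have "G z = 0" for z
    by (rule analytic_continuation_open[OF opn open_UNIV ne connected_UNIV subset_UNIV G(1), of "\<lambda>_. 0"])
       (use FG0 in auto)
  then have "G (complex_of_real b) = 0" by simp
  with G gb show False by simp
qed

definition ent_mat :: "(real \<Rightarrow> real^'n::finite^'m::finite) \<Rightarrow> bool" where
  "ent_mat X \<longleftrightarrow> (\<forall>i j. entire_real (\<lambda>t. X t $ i $ j))"

lemma ent_mat_const: "ent_mat (\<lambda>t. A)"
  unfolding ent_mat_def by (simp add: entire_real_const)

lemma ent_mat_mult: "ent_mat X \<Longrightarrow> ent_mat Y \<Longrightarrow> ent_mat (\<lambda>t. X t ** Y t)"
  unfolding ent_mat_def matrix_matrix_mult_def
  by (auto intro!: entire_real_sum entire_real_mult)

lemma ent_mat_add: "ent_mat X \<Longrightarrow> ent_mat Y \<Longrightarrow> ent_mat (\<lambda>t. X t + Y t)"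
  unfolding ent_mat_def by (auto intro!: entire_real_add)

lemma ent_mat_transpose: "ent_mat X \<Longrightarrow> ent_mat (\<lambda>t. transpose (X t))"
  unfolding ent_mat_def transpose_def by auto

lemma entire_real_det: "ent_mat X \<Longrightarrow> entire_real (\<lambda>t. det (X t))"
  unfolding ent_mat_def det_def
  by (auto intro!: entire_real_sum entire_real_mult entire_real_const entire_real_prod)



declare transpose_matrix_vector[simp del]

lemma mv_inner: "(A *v x) \<bullet> y = x \<bullet> (transpose A *v (y::real^'n))"
  by (metis dot_lmul_matrix vector_transpose_matrix)

lemma orth_QtQ: "orthogonal_matrix Q \<Longrightarrow> transpose Q *v (Q *v x) = x" "orthogonal_matrix Q \<Longrightarrow> Q *v (transpose Q *v x) = x"
  by (simp_all add: matrix_vector_mul_assoc orthogonal_matrix_def)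

lemma orth_inner: "orthogonal_matrix Q \<Longrightarrow> (Q *v x) \<bullet> (Q *v y) = x \<bullet> (y::real^'n)"
  by (simp add: mv_inner orth_QtQ)

lemma EIG:
  fixes Q :: "real^'m::finite^'m"
  assumes U: "subspace U" and ne: "U \<noteq> {0}"
    and QU: "\<And>x. x \<in> U \<Longrightarrow> Q *v x \<in> U" and QtU: "\<And>x. x \<in> U \<Longrightarrow> transpose Q *v x \<in> U"
  shows "\<exists>x\<in>U. x \<bullet> x = 1 \<and> Q *v x + transpose Q *v x = (2 * (x \<bullet> (Q *v x))) *\<^sub>R x"
proof -
  let ?g = "\<lambda>x. x \<bullet> (Q *v x)"
  let ?K = "U \<inter> sphere 0 1"
  have cK: "compact ?K" using compact_Int_closed[OF compact_sphere closed_subspace[OF U], of 0 1]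
    by (simp add: Int_commute)
  obtain u where "u \<in> U" "u \<noteq> 0" using ne U subspace_0 by blast
  then have "u /\<^sub>R norm u \<in> ?K" using U by (auto simp: subspace_scale)
  then have neK: "?K \<noteq> {}" by blast
  have cg: "continuous_on ?K ?g"
    by (intro continuous_intros linear_continuous_on) (simp add: bounded_linear_def matrix_vector_mul_linear)
  obtain x where xK: "x \<in> ?K" and xmax: "\<And>y. y \<in> ?K \<Longrightarrow> ?g y \<le> ?g x"
    using continuous_attains_sup[OF cK neK cg] by blast
  define c where "c = ?g x"
  have xU: "x \<in> U" and nx: "norm x = 1" using xK by auto
  have xx: "x \<bullet> x = 1" using nx by (simp add: dot_square_norm)
  have hom: "?g z \<le> c * (z \<bullet> z)" if "z \<in> U" for z
  proof (cases "z = 0")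
    case True then show ?thesis by simp
  next
    case False
    have "z /\<^sub>R norm z \<in> ?K" using that False U by (auto simp: subspace_scale)
    then have "?g (z /\<^sub>R norm z) \<le> c" using xmax c_def by blast
    moreover have "?g (z /\<^sub>R norm z) = ?g z / (norm z)^2"
      by (simp add: matrix_vector_mult_scaleR power2_eq_square inner_scaleR_left field_simps)
    moreover have "z \<bullet> z = (norm z)^2" by (simp add: dot_square_norm)
    moreover have "norm z > 0" using False by simp
    ultimately show ?thesis by (simp add: field_simps)
  qed
  define w where "w = Q *v x + transpose Q *v x - (2 * c) *\<^sub>R x"
  have wU: "w \<in> U" unfolding w_def using U QU QtU xU by (intro subspace_diff subspace_add subspace_scale) auto
  have xQtx: "x \<bullet> (transpose Q *v x) = c" unfolding c_def
    by (metis inner_commute mv_inner)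
  have "x \<bullet> w = 0" unfolding w_def using xx xQtx c_def
    by (simp add: inner_diff_right inner_add_right)
  then have wx: "w \<bullet> x = 0" by (simp add: inner_commute)
  have "w \<bullet> w = w \<bullet> (Q *v x + transpose Q *v x - (2 * c) *\<^sub>R x)"
    by (subst (2) w_def) (rule refl)
  then have wSx: "w \<bullet> (Q *v x + transpose Q *v x) = w \<bullet> w"
    by (simp add: inner_diff_right wx)
  have key: "t * (w \<bullet> w) \<le> t^2 * (c * (w \<bullet> w) - ?g w)" for t
  proof -
    have h1: "?g (x + t *\<^sub>R w) \<le> c * ((x + t *\<^sub>R w) \<bullet> (x + t *\<^sub>R w))"
      using hom U xU wU by (simp add: subspace_add subspace_scale)
    have h2: "(x + t *\<^sub>R w) \<bullet> (x + t *\<^sub>R w) = 1 + t^2 * (w \<bullet> w)"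
      using xx wx by (simp add: inner_add_left inner_add_right inner_commute power2_eq_square)
    have h3: "?g (x + t *\<^sub>R w) = c + t * (w \<bullet> w) + t^2 * ?g w"
    proof -
      have "x \<bullet> (Q *v w) = w \<bullet> (transpose Q *v x)" by (metis inner_commute mv_inner)
      then have "?g (x + t *\<^sub>R w) = c + t * (w \<bullet> (Q *v x + transpose Q *v x)) + t^2 * ?g w"
        by (simp add: matrix_vector_right_distrib matrix_vector_mult_scaleR inner_add_left inner_add_right
            c_def power2_eq_square algebra_simps)
      then show ?thesis unfolding wSx .
    qed
    have "c + t * (w \<bullet> w) + t^2 * ?g w \<le> c * (1 + t^2 * (w \<bullet> w))"
      using h1 unfolding h2 h3 .
    then show ?thesis by (simp add: algebra_simps)
  qed
  have "w \<bullet> w \<le> 0"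
  proof (rule ccontr)
    assume pos: "\<not> w \<bullet> w \<le> 0"
    define K where "K = c * (w \<bullet> w) - ?g w"
    have "K > 0" using key[of 1] pos K_def by simp
    define t where "t = (w \<bullet> w) / (2 * K)"
    have tp: "t > 0" using pos \<open>K > 0\<close> unfolding t_def by (intro divide_pos_pos) auto
    have "t * (w \<bullet> w) \<le> t * (t * K)" using key[of t] by (simp add: K_def power2_eq_square)
    then have "w \<bullet> w \<le> t * K" using tp by simp
    also have "t * K = (w \<bullet> w) / 2" using \<open>K > 0\<close> by (simp add: t_def)
    finally show False using pos by simp
  qed
  then have "w = 0" by (metis inner_gt_zero_iff not_le)
  then show ?thesis using xU xx unfolding w_def c_def by (intro bexI[of _ x]) auto
qed

definition dg :: "('i::finite \<Rightarrow> real) \<Rightarrow> real^'i^'i" where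
  "dg d = (\<chi> i j. if i = j then d i else 0)"

lemma dg_left: "dg d ** X = (\<chi> i j. d i * X $ i $ j)"
proof -
  have "(\<Sum>k\<in>UNIV. (if i = k then d i else 0) * X $ k $ j) = d i * X $ i $ j" for i j
    by (simp add: if_distrib if_distribR cong: if_cong)
  then show ?thesis by (simp add: dg_def matrix_matrix_mult_def vec_eq_iff)
qed

lemma dg_right: "X ** dg d = (\<chi> i j. X $ i $ j * d j)"
proof -
  have "(\<Sum>k\<in>UNIV. X $ i $ k * (if k = j then d k else 0)) = X $ i $ j * d j" for i j
    by (simp add: if_distrib if_distribR cong: if_cong)
  then show ?thesis by (simp add: dg_def matrix_matrix_mult_def vec_eq_iff)
qed

definition colmat :: "('n::finite \<Rightarrow> real^('n+'n)) \<Rightarrow> ('n \<Rightarrow> real^('n+'n)) \<Rightarrow> 'n rmat" where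
  "colmat e f = (\<chi> i j. case j of Inl a \<Rightarrow> e a $ i | Inr a \<Rightarrow> f a $ i)"

lemma colmat_col: "column (Inl a) (colmat e f) = e a" "column (Inr a) (colmat e f) = f a"
  by (simp_all add: colmat_def column_def)

lemma sys_matrix:
  fixes e f :: "'n::finite \<Rightarrow> real^('n+'n)"
  assumes ee: "\<And>a b. e a \<bullet> e b = (if a = b then 1 else 0)"
    and ff: "\<And>a b. f a \<bullet> f b = (if a = b then 1 else 0)"
    and ef: "\<And>a b. e a \<bullet> f b = 0"
    and Qe: "\<And>a. Q *v e a = c a *\<^sub>R e a - s a *\<^sub>R f a"
    and Qf: "\<And>a. Q *v f a = d a *\<^sub>R (s a *\<^sub>R e a + c a *\<^sub>R f a)"
  shows "orthogonal_matrix (colmat e f)"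
    "Q ** colmat e f = colmat e f ** (Rot c s ** dg (\<lambda>k::'n+'n. case k of Inl a \<Rightarrow> 1 | Inr a \<Rightarrow> d a))"
proof -
  let ?P = "colmat e f"
  have "(transpose ?P ** ?P) $ j $ k = mat 1 $ j $ k" for j k
    unfolding matrix_mult_transpose_dot_column
    by (cases j; cases k) (auto simp: colmat_col mat_def ee ff ef inner_commute[of "f _" "e _"])
  then show "orthogonal_matrix ?P" unfolding orthogonal_matrix by (intro mat_eqI)
  have QP: "(Q ** ?P) $ i $ j = (Q *v column j ?P) $ i" for i j
    by (simp add: matrix_matrix_mult_def matrix_vector_mult_def column_def)
  show "Q ** ?P = ?P ** (Rot c s ** dg (\<lambda>k::'n+'n. case k of Inl a \<Rightarrow> 1 | Inr a \<Rightarrow> d a))"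
  proof (rule mat_eqI)
    fix i j
    show "(Q ** ?P) $ i $ j = (?P ** (Rot c s ** dg (\<lambda>k::'n+'n. case k of Inl a \<Rightarrow> 1 | Inr a \<Rightarrow> d a))) $ i $ j"
    proof (cases j)
      case (Inl a)
      then have "(Q ** ?P) $ i $ j = c a * e a $ i - s a * f a $ i" unfolding QP by (simp add: colmat_col Qe)
      then show ?thesis using Inl unfolding dg_right
        by (simp add: matrix_matrix_mult_def sum_UNIV_sum colmat_def
          if_distrib if_distribR sum.delta' algebra_simps cong: if_cong)
    next
      case (Inr a)
      then have "(Q ** ?P) $ i $ j = d a * (s a * e a $ i + c a * f a $ i)" unfolding QP by (simp add: colmat_col Qf)
      then show ?thesis using Inr unfolding dg_right
        by (simp add: matrix_matrix_mult_def sum_UNIV_sum colmat_def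
          if_distrib if_distribR sum.delta' algebra_simps cong: if_cong)
    qed
  qed
qed

definition sysQ :: "'n::finite rmat \<Rightarrow> 'n set \<Rightarrow> ('n \<Rightarrow> real^('n+'n)) \<Rightarrow> ('n \<Rightarrow> real^('n+'n))
   \<Rightarrow> ('n \<Rightarrow> real) \<Rightarrow> ('n \<Rightarrow> real) \<Rightarrow> bool" where
  "sysQ Q B e f c s \<longleftrightarrow>
    (\<forall>a\<in>B. e a \<bullet> e a = 1 \<and> f a \<bullet> f a = 1 \<and> e a \<bullet> f a = 0 \<and> c a ^ 2 + s a ^ 2 = 1 \<and>
       Q *v e a = c a *\<^sub>R e a - s a *\<^sub>R f a \<and> Q *v f a = s a *\<^sub>R e a + c a *\<^sub>R f a) \<and>
    (\<forall>a\<in>B. \<forall>b\<in>B. a \<noteq> b \<longrightarrow> e a \<bullet> e b = 0 \<and> e a \<bullet> f b = 0 \<and> f a \<bullet> f b = 0)"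

lemma card_UNIV_plus: "CARD('a::finite + 'a) = 2 * CARD('a)"
  using card_Plus[of "UNIV::'a set" "UNIV::'a set"] by simp

lemma dim_UNIV_vec: "dim (UNIV :: (real^('n::finite+'n)) set) = 2 * CARD('n)"
  by (simp add: card_UNIV_plus)

lemma sys_Qt:
  assumes oQ: "orthogonal_matrix Q" and sys: "sysQ Q B e f c s" and b: "b \<in> B"
  shows "transpose Q *v e b = c b *\<^sub>R e b + s b *\<^sub>R f b"
    "transpose Q *v f b = - s b *\<^sub>R e b + c b *\<^sub>R f b"
proof -
  have h: "c b ^ 2 + s b ^ 2 = 1" "Q *v e b = c b *\<^sub>R e b - s b *\<^sub>R f b" "Q *v f b = s b *\<^sub>R e b + c b *\<^sub>R f b"
    using sys b unfolding sysQ_def by auto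
  have "Q *v (c b *\<^sub>R e b + s b *\<^sub>R f b) = c b *\<^sub>R (c b *\<^sub>R e b - s b *\<^sub>R f b) + s b *\<^sub>R (s b *\<^sub>R e b + c b *\<^sub>R f b)"
    by (simp add: h(2,3) matrix_vector_right_distrib matrix_vector_mult_scaleR matrix_vector_mult_diff_distrib)
  also have "\<dots> = (c b ^ 2 + s b ^ 2) *\<^sub>R e b" by (simp add: algebra_simps power2_eq_square)
  finally have "Q *v (c b *\<^sub>R e b + s b *\<^sub>R f b) = e b" using h(1) by simp
  then show "transpose Q *v e b = c b *\<^sub>R e b + s b *\<^sub>R f b" using orth_QtQ(1)[OF oQ] by metis
  have "Q *v (- s b *\<^sub>R e b + c b *\<^sub>R f b) = - s b *\<^sub>R (c b *\<^sub>R e b - s b *\<^sub>R f b) + c b *\<^sub>R (s b *\<^sub>R e b + c b *\<^sub>R f b)"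
    by (simp add: h(2,3) matrix_vector_right_distrib matrix_vector_mult_scaleR matrix_vector_mult_diff_distrib)
  also have "\<dots> = (c b ^ 2 + s b ^ 2) *\<^sub>R f b" by (simp add: algebra_simps power2_eq_square)
  finally have "Q *v (- s b *\<^sub>R e b + c b *\<^sub>R f b) = f b" using h(1) by simp
  then show "transpose Q *v f b = - s b *\<^sub>R e b + c b *\<^sub>R f b" using orth_QtQ(1)[OF oQ] by metis
qed

lemma sys_count:
  fixes Q :: "'n::finite rmat"
  assumes sys: "sysQ Q B e f c s"
  shows "2 * CARD('n) \<le> 2 * card B + dim {y. \<forall>x\<in>e ` B \<union> f ` B. orthogonal x y}"
proof -
  let ?S = "e ` B \<union> f ` B"
  have eqV: "{y \<in> UNIV. \<forall>x\<in>span ?S. orthogonal x y} = {y. \<forall>x\<in>?S. orthogonal x y}"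
  proof (intro set_eqI iffI)
    fix y assume "y \<in> {y. \<forall>x\<in>?S. orthogonal x y}"
    then have "\<forall>x\<in>?S. orthogonal y x" by (simp add: orthogonal_commute)
    then have "orthogonal y x" if "x \<in> span ?S" for x using orthogonal_to_span[OF that] by blast
    then show "y \<in> {y \<in> UNIV. \<forall>x\<in>span ?S. orthogonal x y}"
      by (auto simp: orthogonal_commute)
  qed (auto intro: span_base)
  have "dim {y \<in> UNIV. \<forall>x\<in>span ?S. orthogonal x y} + dim (span ?S) = dim (UNIV :: (real^('n+'n)) set)"
    by (rule dim_subspace_orthogonal_to_vectors) auto
  moreover have "dim (span ?S) \<le> 2 * card B"
  proof -
    have "dim (span ?S) \<le> card ?S" by (simp add: dim_le_card span_base subsetI)
    also have "\<dots> \<le> card (e ` B) + card (f ` B)" by (rule card_Un_le)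
    also have "\<dots> \<le> card B + card B" by (intro add_mono card_image_le) auto
    finally show ?thesis by simp
  qed
  ultimately show ?thesis unfolding eqV dim_UNIV_vec by linarith
qed

lemma two_elems: assumes "2 \<le> card A" obtains x y where "x \<in> A" "y \<in> A" "x \<noteq> y"
proof -
  have "finite A" "A \<noteq> {}" using assms by (auto intro: ccontr)
  then obtain x where x: "x \<in> A" by auto
  have "card (A - {x}) \<ge> 1" using assms x \<open>finite A\<close> by simp
  then have "A - {x} \<noteq> {}" by (metis card.empty not_one_le_zero)
  then obtain y where "y \<in> A - {x}" by blast
  then show ?thesis using x that by auto
qed

lemma det_dg: "det (dg d) = (\<Prod>i\<in>UNIV. d i)"
  by (subst det_diagonal) (auto simp: dg_def)

lemma STUCK:
  fixes Q :: "'n::finite rmat"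
  assumes oQ: "orthogonal_matrix Q" and sys: "sysQ Q B e f c s" and aB: "a \<notin> B" and BU: "insert a B = UNIV"
    and u: "u \<bullet> u = 1" and v: "v \<bullet> v = 1" and uv: "u \<bullet> v = 0"
    and Qu: "Q *v u = u" and Qv: "Q *v v = - v"
    and orth: "\<And>b. b \<in> B \<Longrightarrow> e b \<bullet> u = 0 \<and> f b \<bullet> u = 0 \<and> e b \<bullet> v = 0 \<and> f b \<bullet> v = 0"
  shows "det Q = -1"
proof -
  define E where "E = e(a := u)"
  define F where "F = f(a := v)"
  define C where "C = c(a := 1)"
  define S where "S = s(a := 0)"
  define d where "d = (\<lambda>b. if b = a then -1 else (1::real))"
  have mem: "x = a \<or> x \<in> B" for x using BU by auto
  have sysB: "\<And>x. x \<in> B \<Longrightarrow> e x \<bullet> e x = 1 \<and> f x \<bullet> f x = 1 \<and> e x \<bullet> f x = 0 \<and> c x ^ 2 + s x ^ 2 = 1 \<and>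
       Q *v e x = c x *\<^sub>R e x - s x *\<^sub>R f x \<and> Q *v f x = s x *\<^sub>R e x + c x *\<^sub>R f x"
    and sysB2: "\<And>x y. x \<in> B \<Longrightarrow> y \<in> B \<Longrightarrow> x \<noteq> y \<Longrightarrow> e x \<bullet> e y = 0 \<and> e x \<bullet> f y = 0 \<and> f x \<bullet> f y = 0"
    using sys unfolding sysQ_def by auto
  have ee: "E x \<bullet> E y = (if x = y then 1 else 0)" for x y
    using mem[of x] mem[of y] sysB[of x] sysB2[of x y] orth[of x] orth[of y] u aB
    by (auto simp: E_def inner_commute)
  have ff: "F x \<bullet> F y = (if x = y then 1 else 0)" for x y
    using mem[of x] mem[of y] sysB[of x] sysB2[of x y] orth[of x] orth[of y] v aB
    by (auto simp: F_def inner_commute)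
  have ef: "E x \<bullet> F y = 0" for x y
    using mem[of x] mem[of y] sysB[of x] sysB2[of x y] sysB2[of y x] orth[of x] orth[of y] uv aB
    by (cases "x = y") (auto simp: E_def F_def inner_commute)
  have Qe: "Q *v E x = C x *\<^sub>R E x - S x *\<^sub>R F x" for x
    using mem[of x] sysB[of x] Qu aB by (auto simp: E_def F_def C_def S_def)
  have Qf: "Q *v F x = d x *\<^sub>R (S x *\<^sub>R E x + C x *\<^sub>R F x)" for x
    using mem[of x] sysB[of x] Qv aB by (auto simp: E_def F_def C_def S_def d_def)
  have CS: "C x ^ 2 + S x ^ 2 = 1" for x using mem[of x] sysB[of x] by (auto simp: C_def S_def)
  note M = sys_matrix[OF ee ff ef Qe Qf]
  let ?P = "colmat E F"
  have "det Q * det ?P = det ?P * (det (Rot C S) * det (dg (\<lambda>k::'n+'n. case k of Inl a \<Rightarrow> 1 | Inr a \<Rightarrow> d a)))"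
    using arg_cong[OF M(2), of det] by (simp add: det_mul)
  moreover have "det ?P \<noteq> 0" using det_orthogonal_matrix[OF M(1)] by auto
  moreover have "det (Rot C S) = 1" by (rule det_Rot[OF CS])
  moreover have "det (dg (\<lambda>k::'n+'n. case k of Inl a \<Rightarrow> 1 | Inr a \<Rightarrow> d a)) = -1"
  proof -
    have "det (dg (\<lambda>k::'n+'n. case k of Inl a \<Rightarrow> 1 | Inr a \<Rightarrow> d a)) = (\<Prod>b\<in>UNIV. d b)"
      unfolding det_dg using prod.Plus[of "UNIV::'n set" "UNIV::'n set" "\<lambda>k::'n+'n. case k of Inl a \<Rightarrow> 1 | Inr a \<Rightarrow> d a"]
      by (simp add: o_def)
    also have "\<dots> = -1" by (simp add: d_def)
    finally show ?thesis .
  qed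
  ultimately have "det Q * det ?P = (-1) * det ?P" by simp
  then show ?thesis using \<open>det ?P \<noteq> 0\<close> by (metis mult_cancel_right)
qed





lemma subspace_fix: "subspace V \<Longrightarrow> subspace {y \<in> V. A *v y = k *\<^sub>R (y::real^'n)}"
  unfolding subspace_def
  by (auto simp: matrix_vector_right_distrib matrix_vector_mult_scaleR scaleR_add_right)

lemma EXT:
  fixes Q :: "'n::finite rmat"
  assumes oQ: "orthogonal_matrix Q" and dQ: "det Q = 1" and sys: "sysQ Q B e f c s" and aB: "a \<notin> B"
  shows "\<exists>u v c' s'. u \<bullet> u = 1 \<and> v \<bullet> v = 1 \<and> u \<bullet> v = 0 \<and> c' ^ 2 + s' ^ 2 = 1 \<and>
     Q *v u = c' *\<^sub>R u - s' *\<^sub>R v \<and> Q *v v = s' *\<^sub>R u + c' *\<^sub>R v \<and>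
     (\<forall>b\<in>B. e b \<bullet> u = 0 \<and> f b \<bullet> u = 0 \<and> e b \<bullet> v = 0 \<and> f b \<bullet> v = 0)"
proof -
  let ?S = "e ` B \<union> f ` B"
  define V where "V = {y. \<forall>x\<in>?S. orthogonal x y}"
  have subV: "subspace V" unfolding V_def by (rule subspace_orthogonal_to_vectors)
  have inV: "y \<in> V \<longleftrightarrow> (\<forall>b\<in>B. e b \<bullet> y = 0 \<and> f b \<bullet> y = 0)" for y
    unfolding V_def orthogonal_def by auto
  have QtQ: "transpose Q *v (Q *v x) = x" "Q *v (transpose Q *v x) = x" for x
    using orth_QtQ[OF oQ] by auto
  have QV: "Q *v y \<in> V" if "y \<in> V" for y
  proof -
    have "e b \<bullet> (Q *v y) = 0 \<and> f b \<bullet> (Q *v y) = 0" if b: "b \<in> B" for b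
    proof -
      have "e b \<bullet> (Q *v y) = y \<bullet> (transpose Q *v e b)" by (metis inner_commute mv_inner)
      moreover have "f b \<bullet> (Q *v y) = y \<bullet> (transpose Q *v f b)" by (metis inner_commute mv_inner)
      ultimately show ?thesis using \<open>y \<in> V\<close> b unfolding sys_Qt[OF oQ sys b] inV
        by (simp add: inner_add_right inner_diff_right inner_commute)
    qed
    then show ?thesis unfolding inV by blast
  qed
  have QtV: "transpose Q *v y \<in> V" if "y \<in> V" for y
  proof -
    have h: "Q *v e b = c b *\<^sub>R e b - s b *\<^sub>R f b" "Q *v f b = s b *\<^sub>R e b + c b *\<^sub>R f b" if "b \<in> B" for b
      using sys that unfolding sysQ_def by auto
    have "e b \<bullet> (transpose Q *v y) = 0 \<and> f b \<bullet> (transpose Q *v y) = 0" if b: "b \<in> B" for b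
    proof -
      have "e b \<bullet> (transpose Q *v y) = y \<bullet> (Q *v e b)" by (metis inner_commute mv_inner transpose_transpose)
      moreover have "f b \<bullet> (transpose Q *v y) = y \<bullet> (Q *v f b)" by (metis inner_commute mv_inner transpose_transpose)
      ultimately show ?thesis using \<open>y \<in> V\<close> b unfolding h[OF b] inV
        by (simp add: inner_add_right inner_diff_right inner_commute)
    qed
    then show ?thesis unfolding inV by blast
  qed
  define W1 where "W1 = {y \<in> V. Q *v y = 1 *\<^sub>R y}"
  define W2 where "W2 = {y \<in> V. Q *v y = (-1) *\<^sub>R y}"
  have subW1: "subspace W1" unfolding W1_def by (rule subspace_fix[OF subV])
  have subW2: "subspace W2" unfolding W2_def by (rule subspace_fix[OF subV])
  have QtW1: "transpose Q *v y = y" if "y \<in> W1" for y using that QtQ(1)[of y] by (simp add: W1_def)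
  have neg: "A *v (- x) = - (A *v x)" for A :: "'n rmat" and x
    by (simp add: matrix_vector_mult_def vec_eq_iff sum_negf)
  have QtW2: "transpose Q *v y = - y" if "y \<in> W2" for y
  proof -
    have "Q *v y = - y" using that by (simp add: W2_def)
    then have "transpose Q *v (- y) = y" using QtQ(1)[of y] by simp
    then show ?thesis unfolding neg by (metis minus_minus)
  qed
  define U where "U = {y \<in> V. \<forall>w\<in>W1 \<union> W2. orthogonal w y}"
  have subU: "subspace U"
  proof -
    have "U = V \<inter> {y. \<forall>w\<in>W1 \<union> W2. orthogonal w y}" unfolding U_def by auto
    then show ?thesis using subspace_inter[OF subV subspace_orthogonal_to_vectors] by simp
  qed
  have W1V: "W1 \<subseteq> V" and W2V: "W2 \<subseteq> V" unfolding W1_def W2_def by auto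
  have QU: "Q *v y \<in> U" if "y \<in> U" for y
  proof -
    have "orthogonal w (Q *v y)" if "w \<in> W1 \<union> W2" for w
    proof -
      have "w \<bullet> (Q *v y) = y \<bullet> (transpose Q *v w)" by (metis inner_commute mv_inner)
      then show ?thesis using that \<open>y \<in> U\<close> QtW1 QtW2 unfolding U_def orthogonal_def
        by (auto simp: inner_commute)
    qed
    then show ?thesis using QV \<open>y \<in> U\<close> unfolding U_def by auto
  qed
  have QtU: "transpose Q *v y \<in> U" if "y \<in> U" for y
  proof -
    have "orthogonal w (transpose Q *v y)" if "w \<in> W1 \<union> W2" for w
    proof -
      have "w \<bullet> (transpose Q *v y) = y \<bullet> (Q *v w)" by (metis inner_commute mv_inner transpose_transpose)
      then show ?thesis using that \<open>y \<in> U\<close> unfolding U_def W1_def W2_def orthogonal_def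
        by (auto simp: inner_commute)
    qed
    then show ?thesis using QtV \<open>y \<in> U\<close> unfolding U_def by auto
  qed
  have final: "\<exists>u v c' s'. u \<bullet> u = 1 \<and> v \<bullet> v = 1 \<and> u \<bullet> v = 0 \<and> c' ^ 2 + s' ^ 2 = 1 \<and>
     Q *v u = c' *\<^sub>R u - s' *\<^sub>R v \<and> Q *v v = s' *\<^sub>R u + c' *\<^sub>R v \<and> u \<in> V \<and> v \<in> V"
  proof (cases "U = {0}")
    case False
    obtain x where xU: "x \<in> U" and xx: "x \<bullet> x = 1"
      and Sx: "Q *v x + transpose Q *v x = (2 * (x \<bullet> (Q *v x))) *\<^sub>R x"
      using EIG[OF subU False QU QtU] by blast
    define c0 where "c0 = x \<bullet> (Q *v x)"
    have xV: "x \<in> V" using xU unfolding U_def by auto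
    have QxV: "Q *v x \<in> V" by (rule QV[OF xV])
    have QxQx: "(Q *v x) \<bullet> (Q *v x) = 1" using orth_inner[OF oQ] xx by simp
    have nx: "norm x = 1" using xx by (simp add: norm_eq_sqrt_inner)
    have nQx: "norm (Q *v x) = 1" using QxQx by (simp add: norm_eq_sqrt_inner)
    have "\<bar>c0\<bar> \<le> 1" unfolding c0_def using Cauchy_Schwarz_ineq2[of x "Q *v x"] nx nQx by simp
    then have c2le: "c0 ^ 2 \<le> 1" by (simp add: abs_le_iff power2_eq_square) (smt (verit) mult_le_one mult_minus_left mult_minus_right)
    have Qxc: "(Q *v x - c0 *\<^sub>R x) \<bullet> (Q *v x - c0 *\<^sub>R x) = 1 - c0 ^ 2"
      using xx QxQx by (simp add: inner_diff_left inner_diff_right c0_def inner_commute power2_eq_square)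
    have c2ne: "c0 ^ 2 \<noteq> 1"
    proof
      assume c1: "c0 ^ 2 = 1"
      then have "Q *v x - c0 *\<^sub>R x = 0" using Qxc by simp
      then have Qx: "Q *v x = c0 *\<^sub>R x" by simp
      have "c0 = 1 \<or> c0 = -1" using c1 by (simp add: power2_eq_1_iff)
      then have "x \<in> W1 \<union> W2" using Qx xV unfolding W1_def W2_def by auto
      then have "orthogonal x x" using xU unfolding U_def by auto
      then show False using xx by (simp add: orthogonal_def)
    qed
    have c2: "c0 ^ 2 < 1" using c2le c2ne by simp
    define s0 where "s0 = sqrt (1 - c0 ^ 2)"
    have s0p: "s0 > 0" using c2 by (simp add: s0_def)
    have s02: "s0 ^ 2 = 1 - c0 ^ 2" using c2 by (simp add: s0_def)
    have Qtx: "transpose Q *v x = (2 * c0) *\<^sub>R x - Q *v x" using Sx unfolding c0_def by (simp add: algebra_simps)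
    have QQx: "Q *v (Q *v x) = (2 * c0) *\<^sub>R (Q *v x) - x"
    proof -
      have "x = Q *v (transpose Q *v x)" using QtQ(2) by simp
      also have "\<dots> = (2 * c0) *\<^sub>R (Q *v x) - Q *v (Q *v x)"
        unfolding Qtx by (simp add: matrix_vector_mult_diff_distrib matrix_vector_mult_scaleR)
      finally show ?thesis by (simp add: algebra_simps)
    qed
    define v where "v = (- 1 / s0) *\<^sub>R (Q *v x - c0 *\<^sub>R x)"
    have vV: "v \<in> V" unfolding v_def using subV xV QxV by (intro subspace_scale subspace_diff) auto
    have vv: "v \<bullet> v = 1" unfolding v_def using Qxc s02 s0p c2ne by (simp add: power2_eq_square)
    have xv: "x \<bullet> v = 0" unfolding v_def using xx by (simp add: inner_diff_right c0_def)
    have Qx_eq: "Q *v x = c0 *\<^sub>R x - s0 *\<^sub>R v" unfolding v_def using s0p by simp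
    have "s0 *\<^sub>R (Q *v v) = s0 *\<^sub>R (s0 *\<^sub>R x + c0 *\<^sub>R v)"
    proof -
      have "s0 *\<^sub>R (Q *v v) = x - c0 *\<^sub>R (Q *v x)"
        unfolding v_def using s0p
        by (simp add: matrix_vector_mult_diff_distrib matrix_vector_mult_scaleR QQx vec_eq_iff algebra_simps)
      moreover have "s0 *\<^sub>R (s0 *\<^sub>R x + c0 *\<^sub>R v) = (s0 ^ 2 + c0 ^ 2) *\<^sub>R x - c0 *\<^sub>R (Q *v x)"
        unfolding v_def using s0p by (simp add: vec_eq_iff algebra_simps power2_eq_square)
      ultimately show ?thesis using s02 by simp
    qed
    then have Qv: "Q *v v = s0 *\<^sub>R x + c0 *\<^sub>R v" using s0p by simp
    have "c0 ^ 2 + s0 ^ 2 = 1" using s02 by simp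
    then show ?thesis using xx vv xv Qx_eq Qv xV vV by blast
  next
    case True
    have spW: "span (W1 \<union> W2) \<subseteq> V" using W1V W2V subV by (intro span_minimal) auto
    have Vspan: "V \<subseteq> span (W1 \<union> W2)"
    proof
      fix v assume vV: "v \<in> V"
      obtain y z where y: "y \<in> span (W1 \<union> W2)" and z: "\<And>w. w \<in> span (W1 \<union> W2) \<Longrightarrow> orthogonal z w"
        and vyz: "v = y + z"
        using orthogonal_subspace_decomp_exists[of "W1 \<union> W2" v] by metis
      have "z = v - y" using vyz by simp
      then have zV: "z \<in> V" using vV y spW subV by (auto intro: subspace_diff)
      have "\<forall>w\<in>W1 \<union> W2. orthogonal w z" using z span_base orthogonal_commute by blast
      then have "z \<in> U" using zV unfolding U_def by auto
      then have "z = 0" using True by auto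
      then show "v \<in> span (W1 \<union> W2)" using vyz y by simp
    qed
    show ?thesis
    proof (cases "\<exists>u v. u \<in> W1 \<and> v \<in> W1 \<and> u \<bullet> u = 1 \<and> v \<bullet> v = 1 \<and> u \<bullet> v = 0")
      case True
      then obtain u v where uv: "u \<in> W1" "v \<in> W1" "u \<bullet> u = 1" "v \<bullet> v = 1" "u \<bullet> v = 0" by blast
      have "Q *v u = 1 *\<^sub>R u - 0 *\<^sub>R v" "Q *v v = 0 *\<^sub>R u + 1 *\<^sub>R v" "(1::real) ^ 2 + 0 ^ 2 = 1"
        using uv unfolding W1_def by auto
      then show ?thesis using uv W1V by blast
    next
      case nP1: False
      show ?thesis
      proof (cases "\<exists>u v. u \<in> W2 \<and> v \<in> W2 \<and> u \<bullet> u = 1 \<and> v \<bullet> v = 1 \<and> u \<bullet> v = 0")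
        case True
        then obtain u v where uv: "u \<in> W2" "v \<in> W2" "u \<bullet> u = 1" "v \<bullet> v = 1" "u \<bullet> v = 0" by blast
        have "Q *v u = (-1) *\<^sub>R u - 0 *\<^sub>R v" "Q *v v = 0 *\<^sub>R u + (-1) *\<^sub>R v" "(-1::real) ^ 2 + 0 ^ 2 = 1"
          using uv unfolding W2_def by auto
        then show ?thesis using uv W2V by blast
      next
        case nP2: False
        have dimle: "dim W \<le> 1" if subW: "subspace W"
          and nP: "\<not> (\<exists>u v. u \<in> W \<and> v \<in> W \<and> u \<bullet> u = 1 \<and> v \<bullet> v = 1 \<and> u \<bullet> v = 0)" for W :: "(real^('n+'n)) set"
        proof (rule ccontr)
          assume "\<not> dim W \<le> 1"
          obtain OB where OB: "OB \<subseteq> W" "pairwise orthogonal OB" "\<And>x. x \<in> OB \<Longrightarrow> norm x = 1"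
            "card OB = dim W"
            using orthonormal_basis_subspace[OF subW] by metis
          have "2 \<le> card OB" using OB(4) \<open>\<not> dim W \<le> 1\<close> by simp
          then obtain u v where "u \<in> OB" "v \<in> OB" "u \<noteq> v" by (rule two_elems)
          then have "u \<in> W \<and> v \<in> W \<and> u \<bullet> u = 1 \<and> v \<bullet> v = 1 \<and> u \<bullet> v = 0"
            using OB by (auto simp: pairwise_def orthogonal_def norm_eq_1)
          then show False using nP by blast
        qed
        have d1: "dim W1 \<le> 1" by (rule dimle[OF subW1 nP1])
        have d2: "dim W2 \<le> 1" by (rule dimle[OF subW2 nP2])
        obtain B1 where B1: "B1 \<subseteq> W1" "independent B1" "W1 \<subseteq> span B1" "card B1 = dim W1"
          using basis_exists by blast
        obtain B2 where B2: "B2 \<subseteq> W2" "independent B2" "W2 \<subseteq> span B2" "card B2 = dim W2"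
          using basis_exists by blast
        have fin: "finite (B1 \<union> B2)" using B1 B2 by (simp add: finiteI_independent)
        have "span B1 \<subseteq> span (B1 \<union> B2)" "span B2 \<subseteq> span (B1 \<union> B2)" by (simp_all add: span_mono)
        then have "W1 \<union> W2 \<subseteq> span (B1 \<union> B2)" using B1(3) B2(3) by blast
        then have "span (W1 \<union> W2) \<subseteq> span (B1 \<union> B2)" by (rule span_minimal[OF _ subspace_span])
        then have "V \<subseteq> span (B1 \<union> B2)" using Vspan by blast
        then have dV: "dim V \<le> card B1 + card B2"
        proof -
          have "dim V \<le> card (B1 \<union> B2)" by (rule dim_le_card[OF \<open>V \<subseteq> span (B1 \<union> B2)\<close> fin])
          then show ?thesis using card_Un_le[of B1 B2] by linarith
        qed
        have cnt: "2 * CARD('n) \<le> 2 * card B + dim V" using sys_count[OF sys] unfolding V_def .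
        have "B \<subseteq> UNIV - {a}" using aB by auto
        then have cB: "card B \<le> CARD('n) - 1" using card_mono[of "UNIV - {a}" B] by simp
        have cN: "CARD('n) \<ge> 1" by (simp add: Suc_leI)
        have c1: "card B1 = 1" "card B2 = 1" using dV cnt cB cN d1 d2 B1(4) B2(4) by linarith+
        have "card B = CARD('n) - 1" using cnt cB cN dV d1 d2 B1(4) B2(4) by linarith
        then have "card (insert a B) = CARD('n)" using aB cN by (simp add: card_insert_if)
        then have BU: "insert a B = UNIV" by (intro card_subset_eq) auto
        have "\<not> W1 \<subseteq> {0}" using c1 B1(4) dim_eq_0[of W1] by simp
        then obtain w1 where w1: "w1 \<in> W1" "w1 \<noteq> 0" by blast
        have "\<not> W2 \<subseteq> {0}" using c1 B2(4) dim_eq_0[of W2] by simp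
        then obtain w2 where w2: "w2 \<in> W2" "w2 \<noteq> 0" by blast
        define u where "u = w1 /\<^sub>R norm w1"
        define v where "v = w2 /\<^sub>R norm w2"
        have uW: "u \<in> W1" unfolding u_def using w1 subW1 by (simp add: subspace_scale)
        have vW: "v \<in> W2" unfolding v_def using w2 subW2 by (simp add: subspace_scale)
        have uu: "u \<bullet> u = 1" unfolding u_def using w1 by (simp add: dot_square_norm power2_eq_square)
        have vv: "v \<bullet> v = 1" unfolding v_def using w2 by (simp add: dot_square_norm power2_eq_square)
        have Qu: "Q *v u = u" using uW unfolding W1_def by simp
        have Qv: "Q *v v = - v" using vW unfolding W2_def by simp
        have "u \<bullet> v = (Q *v u) \<bullet> (Q *v v)" using orth_inner[OF oQ] by simp
        then have uv: "u \<bullet> v = 0" unfolding Qu Qv by simp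
        have orth: "e b \<bullet> u = 0 \<and> f b \<bullet> u = 0 \<and> e b \<bullet> v = 0 \<and> f b \<bullet> v = 0" if "b \<in> B" for b
        proof -
          have "u \<in> V" "v \<in> V" using uW vW W1V W2V by auto
          then show ?thesis using that unfolding inV by blast
        qed
        have "det Q = -1" by (rule STUCK[OF oQ sys aB BU uu vv uv Qu Qv orth])
        then show ?thesis using dQ by simp
      qed
    qed
  qed
  then show ?thesis unfolding inV by blast
qed

lemma sys_all:
  fixes Q :: "'n::finite rmat"
  assumes oQ: "orthogonal_matrix Q" and dQ: "det Q = 1"
  shows "\<exists>e f c s. sysQ Q (UNIV::'n set) e f c s"
proof -
  have "finite B \<Longrightarrow> \<exists>e f c s. sysQ Q B e f c s" for B :: "'n set"
  proof (induction B rule: finite_induct)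
    case empty
    show ?case by (simp add: sysQ_def)
  next
    case (insert a B)
    then obtain e f c s where sys: "sysQ Q B e f c s" by blast
    obtain u v c' s' where uv: "u \<bullet> u = 1" "v \<bullet> v = 1" "u \<bullet> v = 0" "c' ^ 2 + s' ^ 2 = 1"
      "Q *v u = c' *\<^sub>R u - s' *\<^sub>R v" "Q *v v = s' *\<^sub>R u + c' *\<^sub>R v"
      and orth: "\<forall>b\<in>B. e b \<bullet> u = 0 \<and> f b \<bullet> u = 0 \<and> e b \<bullet> v = 0 \<and> f b \<bullet> v = 0"
      using EXT[OF oQ dQ sys insert(2)] by blast
    have "sysQ Q (insert a B) (e(a := u)) (f(a := v)) (c(a := c')) (s(a := s'))"
      using sys uv orth insert(2) unfolding sysQ_def by (auto simp: inner_commute)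
    then show ?case by blast
  qed
  then show ?thesis by simp
qed

lemma NF_proof:
  fixes Q :: "'n::finite rmat"
  assumes oQ: "orthogonal_matrix Q" and dQ: "det Q = 1"
  shows "\<exists>P c s. orthogonal_matrix P \<and> (\<forall>a. c a ^ 2 + s a ^ 2 = 1) \<and> Q = P ** Rot c s ** transpose P"
proof -
  obtain e f c s where sys: "sysQ Q (UNIV::'n set) e f c s" using sys_all[OF oQ dQ] by blast
  have h1: "\<And>a. e a \<bullet> e a = 1 \<and> f a \<bullet> f a = 1 \<and> e a \<bullet> f a = 0 \<and> c a ^ 2 + s a ^ 2 = 1 \<and>
       Q *v e a = c a *\<^sub>R e a - s a *\<^sub>R f a \<and> Q *v f a = s a *\<^sub>R e a + c a *\<^sub>R f a"
    and h2: "\<And>a b. a \<noteq> b \<Longrightarrow> e a \<bullet> e b = 0 \<and> e a \<bullet> f b = 0 \<and> f a \<bullet> f b = 0"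
    using sys unfolding sysQ_def by auto
  have ee: "e a \<bullet> e b = (if a = b then 1 else 0)" for a b using h1 h2 by auto
  have ff: "f a \<bullet> f b = (if a = b then 1 else 0)" for a b using h1 h2 by auto
  have ef: "e a \<bullet> f b = 0" for a b using h1 h2 by (cases "a = b") auto
  have Qf: "Q *v f a = (\<lambda>_. 1) a *\<^sub>R (s a *\<^sub>R e a + c a *\<^sub>R f a)" for a using h1 by simp
  have Qe: "Q *v e a = c a *\<^sub>R e a - s a *\<^sub>R f a" for a using h1 by blast
  note M = sys_matrix[OF ee ff ef Qe Qf]
  have dg1: "dg (\<lambda>k::'n+'n. case k of Inl a \<Rightarrow> 1 | Inr a \<Rightarrow> (\<lambda>_. 1::real) a) = mat 1"
    by (rule mat_eqI) (simp add: dg_def mat_def split: sum.splits)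
  let ?P = "colmat e f"
  have QP: "Q ** ?P = ?P ** Rot c s" using M(2) unfolding dg1 by simp
  have PP: "?P ** transpose ?P = mat 1" using M(1) by (simp add: orthogonal_matrix_def)
  have "Q = Q ** ?P ** transpose ?P" by (simp add: PP flip: matrix_mul_assoc)
  also have "\<dots> = ?P ** Rot c s ** transpose ?P" by (simp add: QP)
  finally have "Q = ?P ** Rot c s ** transpose ?P" .
  moreover have "\<forall>a. c a ^ 2 + s a ^ 2 = 1" using h1 by blast
  ultimately show ?thesis using M(1) by blast
qed


declare transpose_matrix_vector[simp]


lemma NF: fixes Q :: "'n::finite rmat" assumes "orthogonal_matrix Q" "det Q = 1"
  shows "\<exists>P c s. orthogonal_matrix P \<and> (\<forall>a. c a ^ 2 + s a ^ 2 = 1) \<and> Q = P ** Rot c s ** transpose P"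
  using NF_proof[OF assms] .

lemma det_orth_sq: "orthogonal_matrix (P::real^'n^'n) \<Longrightarrow> det P * det P = 1"
  using det_orthogonal_matrix[of P] by auto

lemma good_conj:
  fixes P :: "'n::finite rmat"
  assumes oP: "orthogonal_matrix P" and A: "A = P ** Rot c s ** transpose P" and dA: "det A \<noteq> 0"
    and JK: "Jof R = P ** Rot c' s' ** transpose P" and K: "\<And>a. c' a ^ 2 + s' a ^ 2 = 1"
  shows "good R A"
proof -
  have PP: "transpose P ** P = mat 1" using oP by (simp add: orthogonal_matrix_def)
  have "Jof R ** A = P ** (Rot c' s' ** Rot c s) ** transpose P"
    unfolding JK A by (simp add: matrix_mul_assoc) (simp add: PP flip: matrix_mul_assoc)
  also have "\<dots> = P ** (Rot c s ** Rot c' s') ** transpose P" by (simp add: Rot_comm)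
  also have "\<dots> = A ** Jof R"
    unfolding JK A by (simp add: matrix_mul_assoc) (simp add: PP flip: matrix_mul_assoc)
  finally have c: "Jof R ** A = A ** Jof R" .
  have "det (Jof R) \<noteq> 0"
    unfolding JK det_mul using det_orth_sq[OF oP] det_Rot[of c' s'] K by auto
  then have "invertible (Jof R ** A)" using dA by (simp add: invertible_det_nz det_mul)
  then have "invertible (2 *\<^sub>R (Jof R ** A))" by (intro scalar_invertible) auto
  then show ?thesis unfolding good_def c[symmetric] by (simp add: invertible_det_nz scaleR_2)
qed

definition Fl :: "'n \<Rightarrow> 'n::finite rmat" where
  "Fl a0 = dg (\<lambda>i. if i = Inr a0 then -1 else 1)"

lemma Fl_props: fixes a0 :: "'n::finite" shows "transpose (Fl a0) = Fl a0" "orthogonal_matrix (Fl a0)" "det (Fl a0) = -1"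
  "Fl a0 ** J0 ** Fl a0 = Rot (\<lambda>_. 0) (\<lambda>a. if a = a0 then -1 else 1)"
proof -
  show t: "transpose (Fl a0) = Fl a0" by (simp add: Fl_def dg_def transpose_def vec_eq_iff)
  have "Fl a0 ** Fl a0 = mat 1"
    unfolding Fl_def dg_left by (simp add: dg_def mat_def vec_eq_iff)
  then show "orthogonal_matrix (Fl a0)" by (simp add: orthogonal_matrix_def t)
  have "det (Fl a0) = (\<Prod>i\<in>UNIV. Fl a0 $ i $ i)"
    by (rule det_diagonal) (simp add: Fl_def dg_def)
  also have "\<dots> = -1"
    by (simp add: Fl_def dg_def)
  finally show "det (Fl a0) = -1" .
  show "Fl a0 ** J0 ** Fl a0 = Rot (\<lambda>_. 0) (\<lambda>a. if a = a0 then -1 else 1)"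
  proof (rule mat_eqI)
    fix i j
    show "(Fl a0 ** J0 ** Fl a0) $ i $ j = Rot (\<lambda>_. 0) (\<lambda>a. if a = a0 then -1 else 1) $ i $ j"
      unfolding Fl_def dg_left dg_right by (cases i; cases j) (auto simp: J0_Rot)
  qed
qed

lemma per_A:
  fixes A :: "'n::finite rmat"
  assumes "A \<in> SO" shows "\<exists>R. orthogonal_matrix R \<and> det R = 1 \<and> good R A"
proof -
  have oA: "orthogonal_matrix A" and dA: "det A = 1" using assms by (auto simp: SO_def)
  obtain P c s where oP: "orthogonal_matrix P" and cs: "\<forall>a. c a ^ 2 + s a ^ 2 = 1"
    and A: "A = P ** Rot c s ** transpose P" using NF[OF oA dA] by blast
  show ?thesis
  proof (cases "det P = 1")
    case True
    have "good P A"
      by (rule good_conj[OF oP A, where R=P and c'="\<lambda>_. 0" and s'="\<lambda>_. 1"]) (auto simp: dA Jof_def J0_Rot)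
    then show ?thesis using oP True by blast
  next
    case False
    then have dP: "det P = -1" using det_orthogonal_matrix[OF oP] by auto
    obtain a0 :: 'n where True by blast
    let ?R = "P ** Fl a0"
    have "Jof ?R = P ** (Fl a0 ** J0 ** Fl a0) ** transpose P"
      by (simp add: Jof_def matrix_transpose_mul Fl_props(1) matrix_mul_assoc)
    also have "\<dots> = P ** Rot (\<lambda>_. 0) (\<lambda>a. if a = a0 then -1 else 1) ** transpose P"
      by (simp only: Fl_props(4))
    finally have JR: "Jof ?R = P ** Rot (\<lambda>_. 0) (\<lambda>a. if a = a0 then -1 else 1) ** transpose P" .
    have "good ?R A"
      by (rule good_conj[OF oP A _ JR]) (auto simp: dA)
    moreover have "orthogonal_matrix ?R" by (intro orthogonal_matrix_mul oP Fl_props)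
    moreover have "det ?R = 1" by (simp add: det_mul dP Fl_props)
    ultimately show ?thesis by blast
  qed
qed

lemma entire_real_if: "entire_real f \<Longrightarrow> entire_real g \<Longrightarrow> entire_real (\<lambda>t. if P then f t else g t)"
  by (cases P) auto

lemma entire_real_uminus: "entire_real f \<Longrightarrow> entire_real (\<lambda>t. - f t)"
  using entire_real_diff[OF entire_real_const, of f 0] by simp

lemma ent_mat_Rot: fixes th :: "'n::finite \<Rightarrow> real" shows "ent_mat (\<lambda>t. Rot (\<lambda>a. cos (th a * t)) (\<lambda>a. sin (th a * t)))"
  unfolding ent_mat_def
proof (intro allI)
  fix i j :: "'n + 'n"
  show "entire_real (\<lambda>t. Rot (\<lambda>a. cos (th a * t)) (\<lambda>a. sin (th a * t)) $ i $ j)"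
    by (cases i; cases j)
      (auto intro!: entire_real_if entire_real_cos entire_real_sin entire_real_const entire_real_uminus)
qed

lemma combine:
  fixes R1 R2 :: "'n::finite rmat"
  assumes o1: "orthogonal_matrix R1" and d1: "det R1 = 1" and o2: "orthogonal_matrix R2" and d2: "det R2 = 1"
    and S1: "finite S1" and S2: "finite S2"
    and g1: "\<forall>A\<in>S1. good R1 A" and g2: "\<forall>A\<in>S2. good R2 A"
  shows "\<exists>R. orthogonal_matrix R \<and> det R = 1 \<and> (\<forall>A\<in>S1 \<union> S2. good R A)"
proof -
  let ?Q = "transpose R1 ** R2"
  have oQ: "orthogonal_matrix ?Q" using o1 o2 by (simp add: orthogonal_matrix_mul)
  have dQ: "det ?Q = 1" using d1 d2 by (simp add: det_mul)
  obtain P c s where oP: "orthogonal_matrix P" and cs: "\<forall>a. c a ^ 2 + s a ^ 2 = 1"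
    and Q: "?Q = P ** Rot c s ** transpose P" using NF[OF oQ dQ] by blast
  have "\<exists>t. c a = cos t \<and> s a = sin t" for a
    using sincos_total_2pi[of "c a" "s a"] cs by metis
  then obtain th where th: "\<And>a. c a = cos (th a) \<and> s a = sin (th a)" by metis
  define Rt where "Rt t = R1 ** P ** Rot (\<lambda>a. cos (th a * t)) (\<lambda>a. sin (th a * t)) ** transpose P" for t
  have oR: "orthogonal_matrix (Rt t)" for t
    unfolding Rt_def by (intro orthogonal_matrix_mul o1 oP Rot_orth) (auto simp: oP)
  have dR: "det (Rt t) = 1" for t
    unfolding Rt_def det_mul using d1 det_Rot[of "\<lambda>a. cos (th a * t)" "\<lambda>a. sin (th a * t)"] det_orth_sq[OF oP]
    by simp
  have PP: "P ** transpose P = mat 1" using oP by (simp add: orthogonal_matrix_def)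
  have R0: "Rt 0 = R1"
    unfolding Rt_def by (simp add: Rot_one flip: matrix_mul_assoc) (simp add: matrix_mul_assoc PP)
  have "Rt 1 = R1 ** ?Q"
  proof -
    have "c = (\<lambda>a. cos (th a))" "s = (\<lambda>a. sin (th a))" using th by auto
    then show ?thesis unfolding Rt_def Q by (simp add: matrix_mul_assoc)
  qed
  also have "\<dots> = R2" using o1 by (simp add: matrix_mul_assoc orthogonal_matrix_def)
  finally have R1': "Rt 1 = R2" .
  define F where "F S t = (\<Prod>A\<in>S. det (Jof (Rt t) ** A + A ** Jof (Rt t)))" for S t
  have ent: "entire_real (F S)" if "finite S" for S
    unfolding F_def Jof_def Rt_def
    by (intro entire_real_prod[OF that] entire_real_det ent_mat_add ent_mat_mult ent_mat_transpose ent_mat_const ent_mat_Rot)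
  have "F S1 0 \<noteq> 0" using g1 S1 unfolding F_def R0 good_def by simp
  moreover have "F S2 1 \<noteq> 0" using g2 S2 unfolding F_def R1' good_def by simp
  ultimately obtain t where t: "F S1 t \<noteq> 0" "F S2 t \<noteq> 0"
    using entire_real_common_nonzero[OF ent[OF S1] ent[OF S2]] by blast
  have "\<forall>A\<in>S1 \<union> S2. good (Rt t) A"
    using t S1 S2 unfolding F_def good_def by auto
  then show ?thesis using oR dR by blast
qed

theorem proposition4:
  fixes M1 M2 :: "real ^ ('n::finite + 'n) ^ ('n + 'n)"
  assumes "M1 \<in> SO" and "M2 \<in> SO"
  shows "\<exists>J. compat_cs J \<and> circle_defined J M1 \<and> circle_defined J M2 \<and>
             circle_defined J (M1 ** M2) \<and> cocycle_defined J M1 M2"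
proof -
  have M12: "M1 ** M2 \<in> SO" using assms by (auto simp: SO_def det_mul intro: orthogonal_matrix_mul)
  obtain R1 where R1: "orthogonal_matrix R1" "det R1 = 1" "good R1 M1" using per_A[OF assms(1)] by blast
  obtain R2 where R2: "orthogonal_matrix R2" "det R2 = 1" "good R2 M2" using per_A[OF assms(2)] by blast
  obtain R3 where R3: "orthogonal_matrix R3" "det R3 = 1" "good R3 (M1 ** M2)" using per_A[OF M12] by blast
  obtain R4 where R4: "orthogonal_matrix R4" "det R4 = 1" "\<forall>A\<in>{M1} \<union> {M2}. good R4 A"
    using combine[OF R1(1,2) R2(1,2), of "{M1}" "{M2}"] R1(3) R2(3) by auto
  obtain R where R: "orthogonal_matrix R" "det R = 1" "\<forall>A\<in>({M1} \<union> {M2}) \<union> {M1 ** M2}. good R A"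
    using combine[OF R4(1,2) R3(1,2), of "{M1} \<union> {M2}" "{M1 ** M2}"] R4(3) R3(3) by auto
  show ?thesis by (rule assemble[OF R(1) assms]) (use R(3) in auto)
qed


end
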